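(* Let $\Theta$ be a nuclear contracting Dwork operator on $M^*$, and let $b$ be a positive integer with $b\le b_\sigma$, and $c,c_1$ rational numbers, such that $\Theta(M^*(b,c))\subset M^*(qb,c+c_1)$. Let $G=(G_{\{u,j_1\},\{v,j_2\}})$ be the matrix of the $K$-linear map induced by $\Theta$ on $M^*(b,0)\otimes K$ with respect to the basis $\{\pi^{b|u|}X^ue_j^*\}$, i.e. $\Theta(\pi^{b|v|}X^ve_{j_2}^* )=\sum_{u,j_1}G_{\{u,j_1\},\{v,j_2\}}\pi^{b|u|}X^ue_{j_1}^*$. Then for every constant $C>0$, except for finitely many row indices $\{u,j_1\}$, we have $\mathrm{ord}_\pi G_{\{u,j_1\},\{v,j_2\}}\ge C$ for all column indices $\{v,j_2\}$.
   Context: $R$ is a complete discrete valuation ring of characteristic $0$ with uniformizer $\pi$, residue field $\mathbf{F}_q$, fraction field $K$, valuation $\mathrm{ord}_\pi$, $|a|_\pi=p^{-\mathrm{ord}_\pi a}$. Fix $n\ge1$; $X^u=\prod X_i^{u_i}$, $|u|=\sum u_i$ for $u\in\mathbf{Z}^n_{\ge0}$. $A_0=\{\sum a_uX^u:a_u\in R,\ |a_u|_\pi\to0\}$ with Gauss norm $\|\cdot\|$ (max of $|a_u|_\pi$), $A=\{\sum a_uX^u\in A_0:\liminf_{|u|\to\infty}\mathrm{ord}_\pi a_u/|u|>0\}$. $\sigma$ is an $R$-algebra endomorphism of $A_0$ with $\sigma(X_i)=X_i^q+\pi f_i$, $f_i\in A$. For $b>0,c$: $L(b,c)=\{\sum a_vX^v:\mathrm{ord}_\pi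 a_v\ge b|v|+c\}$; $b_\sigma>0$ is a fixed rational with $\pi f_i\in L(b_\sigma,0)$ for all $i$. Let $\{e_j^*\}$ be indexed by an at most countable set and $M^*=\{\sum_ja_je_j^*:a_j\in A_0,\ \|a_j\|\to0\}$ (the continuous dual $\mathrm{Hom}^{\mathrm{cont}}_{A_0}(M,\Omega^nA_0)$ of a Banach module $M$ with formal basis $\{e_j\}$, with $e_j^*$ the dual basis), $M^{*\dagger}=\{\sum a_je_j^*\in M^*:a_j\in A\}$, $M^*(b,c)=\{\sum a_je_j^*\in M^*: a_j\in L(b,c)\}$. A Dwork operator on $M^*$ is a continuous $R$-linear endomorphism $\Theta$ of $M^*$ with $\Theta(\sigma(a)f)=a\Theta(f)$ ($a\in A_0$, $f\in M^*$). Writing $\Theta(X^ve_{j_2}^* )=\sum_{u,j_1}G^*_{\{u,j_1\},\{v,j_2\}}X^ue_{j_1}^*$ with $G^*\in R$, $\Theta$ is nuclear if for each fixed $u,v$, $\lim_{j_1\to\infty}\inf_{j_2}\mathrm{ord}_\pi G^*_{\{u,j_1\},\{v,j_2\}}=\infty$. $\Theta$ is contracting if there are rationals $b>0,c,c_1$ with $\Theta(M^*(b,c))\subset M^*(qb,c+c_1)$. *)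

theory Defs
  imports "HOL-Analysis.Analysis" "HOL-Library.Function_Algebras"
begin

text \<open>K is a field of characteristic 0 (type 'k), ord is a discrete valuation
 on K (meaningful on nonzero elements), unif a uniformizer, R = {x. ord x >= 0} \<union> {0}
 the valuation ring. Monomial exponents u in Z_{>=0}^n are functions 'n => nat with
 'n a finite (nonempty) type of cardinality n. Formal power series are coefficient
 functions ('n => nat) => 'k; elements of M^* are families indexed by 'j of such series.\<close>

definition vge :: "('k::zero \<Rightarrow> int) \<Rightarrow> 'k \<Rightarrow> real \<Rightarrow> bool" where
  "vge ord x r \<longleftrightarrow> x = 0 \<or> r \<le> real_of_int (ord x)"
  \<comment> \<open>ord_pi x >= r, with ord_pi 0 = infinity\<close>

definition Rset :: "('k::zero \<Rightarrow> int) \<Rightarrow> 'k set" where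
  "Rset ord = {x. vge ord x 0}"

text \<open>complete DVR of characteristic 0 with uniformizer unif and residue field of q elements\<close>
definition cdvr :: "('k::field_char_0 \<Rightarrow> int) \<Rightarrow> 'k \<Rightarrow> nat \<Rightarrow> bool" where
  "cdvr ord unif q \<longleftrightarrow>
     (\<forall>x y. x \<noteq> 0 \<longrightarrow> y \<noteq> 0 \<longrightarrow> ord (x * y) = ord x + ord y) \<and>
     (\<forall>x y. x \<noteq> 0 \<longrightarrow> y \<noteq> 0 \<longrightarrow> x + y \<noteq> 0 \<longrightarrow> min (ord x) (ord y) \<le> ord (x + y)) \<and>
     unif \<noteq> 0 \<and> ord unif = 1 \<and>
     (\<forall>s::nat \<Rightarrow> 'k. (\<forall>m. s m \<in> Rset ord) \<longrightarrow>
        (\<forall>N. \<exists>M. \<forall>m\<ge>M. \<forall>m'\<ge>M. vge ord (s m - s m') N) \<longrightarrow>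
        (\<exists>L\<in>Rset ord. \<forall>N. \<exists>M. \<forall>m\<ge>M. vge ord (s m - L) N)) \<and>
     (\<exists>S. S \<subseteq> Rset ord \<and> finite S \<and> card S = q \<and>
        (\<forall>s\<in>S. \<forall>t\<in>S. s \<noteq> t \<longrightarrow> \<not> vge ord (s - t) 1) \<and>
        (\<forall>x\<in>Rset ord. \<exists>s\<in>S. vge ord (x - s) 1))"

definition absdeg :: "('n::finite \<Rightarrow> nat) \<Rightarrow> nat" where
  "absdeg u = (\<Sum>i\<in>UNIV. u i)"

definition A0 :: "('k::field \<Rightarrow> int) \<Rightarrow> (('n::finite \<Rightarrow> nat) \<Rightarrow> 'k) set" where
  "A0 ord = {a. (\<forall>u. a u \<in> Rset ord) \<and> (\<forall>N::real. finite {u. \<not> vge ord (a u) N})}"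

text \<open>A: liminf_{|u| -> oo} ord a_u / |u| > 0, unfolded\<close>
definition Aset :: "('k::field \<Rightarrow> int) \<Rightarrow> (('n::finite \<Rightarrow> nat) \<Rightarrow> 'k) set" where
  "Aset ord = {a \<in> A0 ord. \<exists>\<epsilon>>0. \<exists>N::nat. \<forall>u. N \<le> absdeg u \<longrightarrow>
                 vge ord (a u) (\<epsilon> * real (absdeg u))}"

definition Lset :: "('k::field \<Rightarrow> int) \<Rightarrow> real \<Rightarrow> real \<Rightarrow> (('n::finite \<Rightarrow> nat) \<Rightarrow> 'k) set" where
  "Lset ord b c = {a. \<forall>u. vge ord (a u) (b * real (absdeg u) + c)}"

definition pmul :: "(('n::finite \<Rightarrow> nat) \<Rightarrow> 'k::comm_ring_1) \<Rightarrow> (('n \<Rightarrow> nat) \<Rightarrow> 'k) \<Rightarrow> ('n \<Rightarrow> nat) \<Rightarrow> 'k" where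
  "pmul a b u = (\<Sum>w\<in>{w. w \<le> u}. a w * b (u - w))"

definition monom :: "('n \<Rightarrow> nat) \<Rightarrow> ('n \<Rightarrow> nat) \<Rightarrow> 'k::comm_ring_1" where
  "monom u = (\<lambda>w. if w = u then 1 else 0)"

definition Xpow :: "'n \<Rightarrow> nat \<Rightarrow> ('n \<Rightarrow> nat) \<Rightarrow> 'k::comm_ring_1" where
  "Xpow i e = monom (\<lambda>k. if k = i then e else 0)"

definition pconst :: "'k::comm_ring_1 \<Rightarrow> ('n \<Rightarrow> nat) \<Rightarrow> 'k" where
  "pconst r = (\<lambda>w. if w = (\<lambda>_. 0) then r else 0)"

definition frobenius_lift ::
  "('k::field_char_0 \<Rightarrow> int) \<Rightarrow> 'k \<Rightarrow> nat \<Rightarrow> ('n::finite \<Rightarrow> ('n \<Rightarrow> nat) \<Rightarrow> 'k)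
   \<Rightarrow> ((('n \<Rightarrow> nat) \<Rightarrow> 'k) \<Rightarrow> (('n \<Rightarrow> nat) \<Rightarrow> 'k)) \<Rightarrow> bool" where
  "frobenius_lift ord unif q f \<sigma> \<longleftrightarrow>
     (\<forall>a\<in>A0 ord. \<sigma> a \<in> A0 ord) \<and>
     (\<forall>a\<in>A0 ord. \<forall>b\<in>A0 ord. \<sigma> (a + b) = \<sigma> a + \<sigma> b \<and> \<sigma> (pmul a b) = pmul (\<sigma> a) (\<sigma> b)) \<and>
     \<sigma> (pconst 1) = pconst 1 \<and>
     (\<forall>r\<in>Rset ord. \<forall>a\<in>A0 ord. \<sigma> (\<lambda>u. r * a u) = (\<lambda>u. r * \<sigma> a u)) \<and>
     (\<forall>i. f i \<in> Aset ord \<and> \<sigma> (Xpow i 1) = (\<lambda>u. Xpow i q u + unif * f i u))"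

text \<open>M^* = {sum_j a_j e_j^* : a_j in A_0, ||a_j|| -> 0}, an element being the family (a_j)_j\<close>
definition Mstar :: "('k::field \<Rightarrow> int) \<Rightarrow> ('j \<Rightarrow> ('n::finite \<Rightarrow> nat) \<Rightarrow> 'k) set" where
  "Mstar ord = {F. (\<forall>j. F j \<in> A0 ord) \<and>
                   (\<forall>N::real. finite {j. \<not> (\<forall>u. vge ord (F j u) N)})}"

definition Mstar_bc :: "('k::field \<Rightarrow> int) \<Rightarrow> real \<Rightarrow> real \<Rightarrow> ('j \<Rightarrow> ('n::finite \<Rightarrow> nat) \<Rightarrow> 'k) set" where
  "Mstar_bc ord b c = {F \<in> Mstar ord. \<forall>j. F j \<in> Lset ord b c}"

definition smulM :: "(('n::finite \<Rightarrow> nat) \<Rightarrow> 'k::comm_ring_1) \<Rightarrow> ('j \<Rightarrow> ('n \<Rightarrow> nat) \<Rightarrow> 'k) \<Rightarrow> ('j \<Rightarrow> ('n \<Rightarrow> nat) \<Rightarrow> 'k)" where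
  "smulM a F = (\<lambda>j. pmul a (F j))"

type_synonym ('j,'n,'k) mstar_op = "('j \<Rightarrow> ('n \<Rightarrow> nat) \<Rightarrow> 'k) \<Rightarrow> ('j \<Rightarrow> ('n \<Rightarrow> nat) \<Rightarrow> 'k)"

definition dwork_operator ::
  "('k::field_char_0 \<Rightarrow> int) \<Rightarrow> ((('n::finite \<Rightarrow> nat) \<Rightarrow> 'k) \<Rightarrow> (('n \<Rightarrow> nat) \<Rightarrow> 'k))
   \<Rightarrow> ('j,'n,'k) mstar_op \<Rightarrow> bool" where
  "dwork_operator ord \<sigma> \<Theta> \<longleftrightarrow>
     (\<forall>F\<in>Mstar ord. \<Theta> F \<in> Mstar ord) \<and>
     (\<forall>F\<in>Mstar ord. \<forall>G\<in>Mstar ord. \<Theta> (F + G) = \<Theta> F + \<Theta> G) \<and>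
     (\<forall>r\<in>Rset ord. \<forall>F\<in>Mstar ord. \<Theta> (\<lambda>j u. r * F j u) = (\<lambda>j u. r * \<Theta> F j u)) \<and>
     (\<forall>F\<in>Mstar ord. \<forall>N::real. \<exists>N'::real. \<forall>G\<in>Mstar ord.
        (\<forall>j u. vge ord (G j u - F j u) N') \<longrightarrow> (\<forall>j u. vge ord (\<Theta> G j u - \<Theta> F j u) N)) \<and>
     (\<forall>a\<in>A0 ord. \<forall>F\<in>Mstar ord. \<Theta> (smulM (\<sigma> a) F) = smulM a (\<Theta> F))"

text \<open>basis element X^w e_j^*\<close>
definition basisM :: "('n \<Rightarrow> nat) \<Rightarrow> 'j \<Rightarrow> 'j \<Rightarrow> ('n \<Rightarrow> nat) \<Rightarrow> 'k::comm_ring_1" where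
  "basisM w j = (\<lambda>j' u. if j' = j \<and> u = w then 1 else 0)"

definition Gstar :: "('j,'n,'k::comm_ring_1) mstar_op \<Rightarrow> ('n \<Rightarrow> nat) \<Rightarrow> 'j \<Rightarrow> ('n \<Rightarrow> nat) \<Rightarrow> 'j \<Rightarrow> 'k" where
  "Gstar \<Theta> u j1 w j2 = \<Theta> (basisM w j2) j1 u"

definition nuclear :: "('k::field \<Rightarrow> int) \<Rightarrow> ('j,'n,'k) mstar_op \<Rightarrow> bool" where
  "nuclear ord \<Theta> \<longleftrightarrow> (\<forall>u w. \<forall>C::real.
      eventually (\<lambda>j1. \<forall>j2. vge ord (Gstar \<Theta> u j1 w j2) C) cofinite)"

definition contracting :: "('k::field \<Rightarrow> int) \<Rightarrow> nat \<Rightarrow> ('j,'n::finite,'k) mstar_op \<Rightarrow> bool" where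
  "contracting ord q \<Theta> \<longleftrightarrow> (\<exists>b c c1. b \<in> \<rat> \<and> c \<in> \<rat> \<and> c1 \<in> \<rat> \<and> b > 0 \<and>
      \<Theta> ` Mstar_bc ord b c \<subseteq> Mstar_bc ord (real q * b) (c + c1))"

text \<open>G_{(u,j1),(w,j2)}: matrix w.r.t. basis unif^{b|u|} X^u e_j^*, i.e.
  Theta(unif^{b|w|} X^w e_{j2}^*) = sum G_{(u,j1),(w,j2)} unif^{b|u|} X^u e_{j1}^*\<close>
definition Gmat :: "'k::field \<Rightarrow> nat \<Rightarrow> ('j,'n::finite,'k) mstar_op \<Rightarrow> ('n \<Rightarrow> nat) \<Rightarrow> 'j \<Rightarrow> ('n \<Rightarrow> nat) \<Rightarrow> 'j \<Rightarrow> 'k" where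
  "Gmat unif b \<Theta> u j1 w j2 =
     \<Theta> (\<lambda>j' u'. if j' = j2 \<and> u' = w then unif ^ (b * absdeg w) else 0) j1 u / unif ^ (b * absdeg u)"

end

theory Submission
  imports Defs
begin

lemma vge_mono: "vge ord x r \<Longrightarrow> r' \<le> r \<Longrightarrow> vge ord x r'"
  by (auto simp: vge_def)

lemma vge_zero[simp]: "vge ord 0 r"
  by (simp add: vge_def)

lemma cdvr_mult: "cdvr ord unif q \<Longrightarrow> x \<noteq> 0 \<Longrightarrow> y \<noteq> 0 \<Longrightarrow> ord (x * y) = ord x + ord y"
  unfolding cdvr_def by blast

lemma cdvr_pow: assumes "cdvr ord unif q" shows "unif ^ k \<noteq> 0 \<and> ord (unif ^ k) = int k"
proof (induction k)
  case 0
  have u: "unif \<noteq> 0" using assms unfolding cdvr_def by blast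
  have "ord (1 * 1) = ord 1 + ord (1::'a)" using cdvr_mult[OF assms, of 1 1] by simp
  then show ?case by simp
next
  case (Suc k)
  have u: "unif \<noteq> 0" "ord unif = 1" using assms unfolding cdvr_def by blast+
  then show ?case using Suc cdvr_mult[OF assms, of unif "unif ^ k"] by simp
qed

lemma vge_div: assumes "cdvr ord unif q" "vge ord x r" "y \<noteq> 0"
  shows "vge ord (x / y) (r - ord y)"
proof (cases "x = 0")
  case False
  then have "x / y \<noteq> 0" using assms by simp
  moreover have "x = (x / y) * y" using assms by simp
  ultimately have "ord x = ord (x / y) + ord y" using cdvr_mult[OF assms(1), of "x/y" y] assms(3) by simp
  then show ?thesis using assms False by (auto simp: vge_def)
qed simp

lemma vge_cancel: assumes "cdvr ord unif q" "vge ord (y * x) r" "y \<noteq> 0"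
  shows "vge ord x (r - ord y)"
proof (cases "x = 0")
  case False
  then have "ord (y * x) = ord y + ord x" using cdvr_mult[OF assms(1)] assms(3) by simp
  then show ?thesis using assms False by (auto simp: vge_def)
qed simp

lemma vge_mult: assumes "cdvr ord unif q" "vge ord x r" "y \<noteq> 0"
  shows "vge ord (y * x) (r + ord y)"
proof (cases "x = 0")
  case False
  then have "ord (y * x) = ord y + ord x" using cdvr_mult[OF assms(1)] assms(3) by simp
  then show ?thesis using assms False by (auto simp: vge_def)
qed simp

lemma cdvr_q: assumes R: "cdvr ord unif q" shows "q \<ge> 2"
proof -
  have o1: "ord 1 = 0" using cdvr_pow[OF R, of 0] by simp
  have "ord ((-1) * (-1)) = ord (-1) + ord (-1::'a)" using cdvr_mult[OF R, of "-1" "-1"] by simp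
  then have om1: "ord (-1) = 0" using o1 by simp
  obtain S where S: "S \<subseteq> Rset ord" "finite S" "card S = q"
     "\<forall>x\<in>Rset ord. \<exists>s\<in>S. vge ord (x - s) 1"
    using R unfolding cdvr_def by blast
  have "1 \<in> Rset ord" "0 \<in> Rset ord" using o1 by (auto simp: Rset_def vge_def)
  then obtain s t where st: "s \<in> S" "t \<in> S" "vge ord (1 - s) 1" "vge ord (0 - t) 1"
    using S(4) by blast
  show ?thesis
  proof (rule ccontr)
    assume "\<not> q \<ge> 2"
    then have "card S \<le> 1" using S by simp
    then have "s = t" using st S(2) by (metis card_le_Suc0_iff_eq One_nat_def)
    show False
    proof (cases "s = 0 \<or> s = 1")
      case True
      then show ?thesis using st \<open>s = t\<close> o1 om1 by (auto simp: vge_def)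
    next
      case False
      have a: "ord (1 - s) \<ge> 1" using st False by (auto simp: vge_def)
      have "ord (-s) \<ge> 1" using st \<open>s = t\<close> False by (auto simp: vge_def)
      moreover have "ord (-s) = ord (-1) + ord s" using cdvr_mult[OF R, of "-1" s] False by simp
      ultimately have b: "ord s \<ge> 1" using om1 by simp
      have "min (ord (1 - s)) (ord s) \<le> ord ((1 - s) + s)"
        using R False unfolding cdvr_def by (metis add_diff_cancel_left' diff_add_cancel one_neq_zero right_minus_eq)
      then show False using a b o1 by simp
    qed
  qed
qed

lemma finite_absdeg: "finite {u::'n::finite \<Rightarrow> nat. absdeg u < N}"
proof (rule finite_subset)
  show "{u::'n \<Rightarrow> nat. absdeg u < N} \<subseteq> Pi\<^sub>E UNIV (\<lambda>_. {..N})"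
  proof
    fix u :: "'n \<Rightarrow> nat" assume "u \<in> {u. absdeg u < N}"
    then have "u i \<le> N" for i
      using member_le_sum[of i UNIV u] unfolding absdeg_def by simp
    then show "u \<in> Pi\<^sub>E UNIV (\<lambda>_. {..N})" by (simp add: PiE_UNIV_domain)
  qed
  show "finite (Pi\<^sub>E (UNIV::'n set) (\<lambda>_. {..N}))" by (rule finite_PiE) auto
qed

lemma single_Mstar: assumes R: "cdvr ord unif q"
  shows "(\<lambda>j' u'. if j' = j2 \<and> u' = w then unif ^ k else 0) \<in> Mstar ord"
proof -
  have Rk: "unif ^ k \<in> Rset ord" using cdvr_pow[OF R, of k] by (simp add: Rset_def vge_def)
  have "0 \<in> Rset ord" by (simp add: Rset_def)
  show ?thesis unfolding Mstar_def A0_def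
    using Rk \<open>0 \<in> Rset ord\<close>
    by (auto intro: finite_subset[of _ "{w}"] finite_subset[of _ "{j2}"])
qed

theorem lemma4p11:
  fixes ord :: "'k::field_char_0 \<Rightarrow> int" and unif :: 'k and q :: nat
    and f :: "'n::finite \<Rightarrow> ('n \<Rightarrow> nat) \<Rightarrow> 'k"
    and \<sigma> :: "(('n \<Rightarrow> nat) \<Rightarrow> 'k) \<Rightarrow> (('n \<Rightarrow> nat) \<Rightarrow> 'k)"
    and b_sigma :: real
    and \<Theta> :: "('j::countable \<Rightarrow> ('n \<Rightarrow> nat) \<Rightarrow> 'k) \<Rightarrow> ('j \<Rightarrow> ('n \<Rightarrow> nat) \<Rightarrow> 'k)"
    and b :: nat and c c1 :: real
  assumes R: "cdvr ord unif q"
    and sig: "frobenius_lift ord unif q f \<sigma>"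
    and bsig: "b_sigma \<in> \<rat>" "b_sigma > 0" "\<forall>i. (\<lambda>u. unif * f i u) \<in> Lset ord b_sigma 0"
    and dw: "dwork_operator ord \<sigma> \<Theta>"
    and nuc: "nuclear ord \<Theta>"
    and contr: "contracting ord q \<Theta>"
    and b: "b > 0" "real b \<le> b_sigma"
    and cc: "c \<in> \<rat>" "c1 \<in> \<rat>"
    and incl: "\<Theta> ` Mstar_bc ord (real b) c \<subseteq> Mstar_bc ord (real q * real b) (c + c1)"
  shows "\<forall>C::real. C > 0 \<longrightarrow>
           finite {(u, j1). \<not> (\<forall>w j2. vge ord (Gmat unif b \<Theta> u j1 w j2) C)}"
proof (intro allI impI)
  fix C :: real assume "C > 0"
  have add: "\<And>F G. F \<in> Mstar ord \<Longrightarrow> G \<in> Mstar ord \<Longrightarrow> \<Theta> (F + G) = \<Theta> F + \<Theta> G"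
   and smul: "\<And>r F. r \<in> Rset ord \<Longrightarrow> F \<in> Mstar ord \<Longrightarrow> \<Theta> (\<lambda>j u. r * F j u) = (\<lambda>j u. r * \<Theta> F j u)"
   and cont: "\<And>F N. F \<in> Mstar ord \<Longrightarrow> \<exists>N'::real. \<forall>G\<in>Mstar ord.
        (\<forall>j u. vge ord (G j u - F j u) N') \<longrightarrow> (\<forall>j u. vge ord (\<Theta> G j u - \<Theta> F j u) N)"
    using dw unfolding dwork_operator_def by blast+
  define F where "F w j2 = (\<lambda>j' u'. if j' = j2 \<and> u' = w then unif ^ (b * absdeg w) else (0::'k))"
    for w :: "'n \<Rightarrow> nat" and j2 :: 'j
  have Gm: "Gmat unif b \<Theta> u j1 w j2 = \<Theta> (F w j2) j1 u / unif ^ (b * absdeg u)" for u j1 w j2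
    unfolding Gmat_def F_def by simp
  have pw: "unif ^ k \<noteq> 0" "ord (unif ^ k) = int k" for k using cdvr_pow[OF R, of k] by auto
  have Rk: "unif ^ k \<in> Rset ord" for k using pw by (simp add: Rset_def vge_def)
  have FM: "F w j2 \<in> Mstar ord" for w j2 unfolding F_def by (rule single_Mstar[OF R])
  have zM: "(0::'j \<Rightarrow> ('n \<Rightarrow> nat) \<Rightarrow> 'k) \<in> Mstar ord"
    unfolding Mstar_def A0_def Rset_def by simp
  have T0: "\<Theta> 0 = 0"
    using add[OF zM zM] by simp
  have q2: "q \<ge> 2" by (rule cdvr_q[OF R])
  define m where "m = nat \<lceil>c\<rceil>"
  have mc: "real m \<ge> c" unfolding m_def by linarith
  have A: "vge ord (\<Theta> (F w j2) j1 u) (real q * real b * real (absdeg u) + (c + c1) - real m)"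
    for w j2 j1 u
  proof -
    define H where "H = (\<lambda>j u. unif ^ m * F w j2 j u)"
    have H': "H = (\<lambda>j' u'. if j' = j2 \<and> u' = w then unif ^ (m + b * absdeg w) else 0)"
      unfolding H_def F_def by (intro ext) (simp add: power_add)
    have HM: "H \<in> Mstar ord" unfolding H' by (rule single_Mstar[OF R])
    have "H j \<in> Lset ord (real b) c" for j
      unfolding Lset_def H' using pw mc by (auto simp: vge_def)
    then have "H \<in> Mstar_bc ord (real b) c" using HM by (simp add: Mstar_bc_def)
    then have "\<Theta> H \<in> Mstar_bc ord (real q * real b) (c + c1)" using incl by blast
    moreover have "\<Theta> H = (\<lambda>j u. unif ^ m * \<Theta> (F w j2) j u)"
      unfolding H_def by (rule smul[OF Rk FM])
    ultimately have "vge ord (unif ^ m * \<Theta> (F w j2) j1 u) (real q * real b * real (absdeg u) + (c + c1))"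
      by (auto simp: Mstar_bc_def Lset_def)
    from vge_cancel[OF R this pw(1)] show ?thesis using pw(2) by simp
  qed
  define N0 where "N0 = nat \<lceil>C - c - c1 + real m\<rceil>"
  have Agood: "vge ord (Gmat unif b \<Theta> u j1 w j2) C" if "absdeg u \<ge> N0" for u j1 w j2
  proof -
    have "vge ord (Gmat unif b \<Theta> u j1 w j2)
       (real q * real b * real (absdeg u) + (c + c1) - real m - real (b * absdeg u))"
      unfolding Gm using vge_div[OF R A[of w j2 j1 u] pw(1)[of "b * absdeg u"]] pw(2)[of "b * absdeg u"] by simp
    moreover have "q * b * absdeg u \<ge> b * absdeg u + absdeg u"
    proof -
      have "q * b \<ge> 2 * b" using q2 by (rule mult_le_mono1)
      then have "q * b \<ge> b + 1" using b(1) by linarith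
      then have "(b + 1) * absdeg u \<le> q * b * absdeg u" by (rule mult_le_mono1)
      then show ?thesis by (simp add: algebra_simps)
    qed
    then have "real q * real b * real (absdeg u) \<ge> real (b * absdeg u) + real (absdeg u)"
      by (metis of_nat_add of_nat_le_iff of_nat_mult)
    moreover have "real (absdeg u) \<ge> C - c - c1 + real m" using that unfolding N0_def by linarith
    ultimately show ?thesis by - (erule vge_mono, linarith)
  qed
  obtain N' where N': "\<forall>G\<in>Mstar ord. (\<forall>j u. vge ord (G j u - 0 j u) N') \<longrightarrow>
      (\<forall>j u. vge ord (\<Theta> G j u - \<Theta> 0 j u) (C + real b * real N0))"
    using cont[OF zM] by blast
  define W0 where "W0 = nat \<lceil>N'\<rceil>"
  have Bgood: "vge ord (Gmat unif b \<Theta> u j1 w j2) C" if "absdeg w \<ge> W0" "absdeg u < N0" for u j1 w j2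
  proof -
    have "b * absdeg w \<ge> absdeg w" using b(1) by simp
    then have h1: "real (b * absdeg w) \<ge> real (absdeg w)" by (rule of_nat_mono)
    have h2: "real (absdeg w) \<ge> real W0" using that(1) by simp
    have h3: "real W0 \<ge> N'" unfolding W0_def by (rule real_nat_ceiling_ge)
    have "real (b * absdeg w) \<ge> N'" using h1 h2 h3 by linarith
    then have "\<forall>j u. vge ord (F w j2 j u - 0 j u) N'" unfolding F_def using pw by (auto simp: vge_def)
    then have "vge ord (\<Theta> (F w j2) j1 u) (C + real b * real N0)" using N' FM T0 by fastforce
    from vge_div[OF R this pw(1)[of "b * absdeg u"]]
    have "vge ord (Gmat unif b \<Theta> u j1 w j2) (C + real b * real N0 - real (b * absdeg u))"
      unfolding Gm using pw(2)[of "b * absdeg u"] by simp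
    moreover have "real (b * absdeg u) \<le> real b * real N0" using that(2)
      by (metis less_imp_le_nat mult_le_mono2 of_nat_le_iff of_nat_mult)
    ultimately show ?thesis by - (erule vge_mono, linarith)
  qed
  have FB: "F w j2 = (\<lambda>j u. unif ^ (b * absdeg w) * basisM w j2 j u)" for w j2
    unfolding F_def basisM_def by (intro ext) simp
  have BM: "basisM w j2 \<in> Mstar ord" for w j2
  proof -
    have "basisM w j2 = (\<lambda>j' u'. if j' = j2 \<and> u' = w then unif ^ 0 else (0::'k))"
      unfolding basisM_def by (intro ext) simp
    then show ?thesis using single_Mstar[OF R, of j2 w 0] by simp
  qed
  have Cgood: "vge ord (Gmat unif b \<Theta> u j1 w j2) C"
    if "vge ord (Gstar \<Theta> u j1 w j2) (C + real b * real N0)" "absdeg u < N0" for u j1 w j2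
  proof -
    have "\<Theta> (F w j2) = (\<lambda>j u. unif ^ (b * absdeg w) * \<Theta> (basisM w j2) j u)"
      unfolding FB by (rule smul[OF Rk BM])
    then have "\<Theta> (F w j2) j1 u = unif ^ (b * absdeg w) * Gstar \<Theta> u j1 w j2"
      by (simp add: Gstar_def)
    moreover have "vge ord (unif ^ (b * absdeg w) * Gstar \<Theta> u j1 w j2)
        (C + real b * real N0 + real_of_int (ord (unif ^ (b * absdeg w))))"
      by (rule vge_mult[OF R that(1) pw(1)])
    ultimately have "vge ord (\<Theta> (F w j2) j1 u) (C + real b * real N0 + real (b * absdeg w))"
      using pw(2)[of "b * absdeg w"] by simp
    then have "vge ord (\<Theta> (F w j2) j1 u) (C + real b * real N0)"
      by (rule vge_mono) simp
    from vge_div[OF R this pw(1)[of "b * absdeg u"]]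
    have "vge ord (Gmat unif b \<Theta> u j1 w j2) (C + real b * real N0 - real (b * absdeg u))"
      unfolding Gm using pw(2)[of "b * absdeg u"] by simp
    moreover have "real (b * absdeg u) \<le> real b * real N0" using that(2)
      by (metis less_imp_le_nat mult_le_mono2 of_nat_le_iff of_nat_mult)
    ultimately show ?thesis by - (erule vge_mono, linarith)
  qed
  have sub: "{(u, j1). \<not> (\<forall>w j2. vge ord (Gmat unif b \<Theta> u j1 w j2) C)} \<subseteq>
    (\<Union>u\<in>{u. absdeg u < N0}. \<Union>w\<in>{w. absdeg w < W0}.
       {u} \<times> {j1. \<not> (\<forall>j2. vge ord (Gstar \<Theta> u j1 w j2) (C + real b * real N0))})"
  proof
    fix x assume "x \<in> {(u, j1). \<not> (\<forall>w j2. vge ord (Gmat unif b \<Theta> u j1 w j2) C)}"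
    then obtain u j1 w j2 where x: "x = (u, j1)" and bad: "\<not> vge ord (Gmat unif b \<Theta> u j1 w j2) C"
      by blast
    from bad have u: "absdeg u < N0" using Agood by (meson not_le)
    then have w: "absdeg w < W0" using Bgood bad by (meson not_le)
    have "\<not> vge ord (Gstar \<Theta> u j1 w j2) (C + real b * real N0)" using Cgood bad u by blast
    then show "x \<in> (\<Union>u\<in>{u. absdeg u < N0}. \<Union>w\<in>{w. absdeg w < W0}.
       {u} \<times> {j1. \<not> (\<forall>j2. vge ord (Gstar \<Theta> u j1 w j2) (C + real b * real N0))})"
      using u w x by blast
  qed
  have fin: "finite {j1. \<not> (\<forall>j2. vge ord (Gstar \<Theta> u j1 w j2) C')}" for u w C'
    using nuc unfolding nuclear_def eventually_cofinite by blast
  show "finite {(u, j1). \<not> (\<forall>w j2. vge ord (Gmat unif b \<Theta> u j1 w j2) C)}"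
    by (rule finite_subset[OF sub]) (intro finite_UN_I finite_absdeg finite_cartesian_product fin finite.intros)
qed

end
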